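(* Let $X$ be a real linear space and $\phi\colon X\times X\to\mathbb{R}$ a biadditive functional such that $\phi(z_0,z_0)<0$ for some $z_0\in X$. Then there is no function $f\colon X\to\mathbb{R}$ satisfying $f(x+y)=f(x)f(y)-\phi(x,y)$ for all $x,y\in X$.
   Context: A map $\phi\colon X\times X\to\mathbb{R}$ is biadditive if it is additive in each variable separately (no homogeneity assumed). *)

theory Defs
  imports Complex_Main
begin

definition biadditive :: "('a::ab_group_add \<Rightarrow> 'a \<Rightarrow> real) \<Rightarrow> bool" where
  "biadditive \<phi> \<longleftrightarrow>
     (\<forall>x y z. \<phi> (x + y) z = \<phi> x z + \<phi> y z) \<and>
     (\<forall>x y z. \<phi> x (y + z) = \<phi> x y + \<phi> x z)"

end

theory Submission
  imports Defs
begin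

theorem corollary1:
  fixes \<phi> :: "'a::real_vector \<Rightarrow> 'a \<Rightarrow> real" and z0 :: 'a
  assumes "biadditive \<phi>"
    and "\<phi> z0 z0 < 0"
  shows "\<not> (\<exists>f :: 'a \<Rightarrow> real. \<forall>x y. f (x + y) = f x * f y - \<phi> x y)"
proof
  assume "\<exists>f :: 'a \<Rightarrow> real. \<forall>x y. f (x + y) = f x * f y - \<phi> x y"
  then obtain f :: "'a \<Rightarrow> real" where F: "\<And>x y. f (x + y) = f x * f y - \<phi> x y" by blast
  have L: "\<And>x y z. \<phi> (x + y) z = \<phi> x z + \<phi> y z" and R: "\<And>x y z. \<phi> x (y + z) = \<phi> x y + \<phi> x z"
    using assms(1) unfolding biadditive_def by auto
  define a where "a = \<phi> z0 z0"
  have a: "a < 0" using assms(2) a_def by simp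
  have assoc: "\<phi> x y * (f z - 1) = \<phi> y z * (f x - 1)" for x y z
  proof -
    have "f ((x + y) + z) = f (x + (y + z))" by (simp add: add.assoc)
    hence "(f x * f y - \<phi> x y) * f z - (\<phi> x z + \<phi> y z) = f x * (f y * f z - \<phi> y z) - (\<phi> x y + \<phi> x z)"
      using F[of "x+y" z] F[of x "y+z"] F[of x y] F[of y z] L R by simp
    thus ?thesis by (simp add: algebra_simps)
  qed
  have g: "a * (f z - 1) = \<phi> z0 z * (f z0 - 1)" for z
    using assoc[of z0 z0 z] a_def by simp
  have 2: "\<phi> z0 (z0 + z0) = 2 * a" using R[of z0 z0 z0] a_def by simp
  have e1: "a * (f (z0+z0) - 1) = 2 * a * (f z0 - 1)" using g[of "z0+z0"] 2 by simp
  have e2: "f (z0+z0) = f z0 * f z0 - a" using F[of z0 z0] a_def by simp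
  define k where "k = f z0 - 1"
  have "f (z0+z0) - 1 = 2 * k" using e1 a k_def by (simp add: mult_left_cancel)
  hence "(1 + k) * (1 + k) - a - 1 = 2 * k" using e2 k_def by simp
  hence "k * k = a" by (simp add: algebra_simps)
  moreover have "k * k \<ge> 0" by simp
  ultimately show False using a by simp
qed

end
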